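(* Let $N$ and $n$ be positive integers with $N \le n$, and let $\pi \in S_n$ be a permutation of $\{1,2,\dots,n\}$ such that every cycle of $\pi$ (in its disjoint cycle decomposition, fixed points counted as $1$-cycles) contains at most one element $i$ with $i > N$. Write the cycle type of $\pi$ as a partition $\lambda = (\lambda_1,\dots,\lambda_m,1,\dots,1) \vdash n$, where $\lambda_1 \ge \lambda_2 \ge \dots \ge \lambda_m > 1$ are the lengths of the cycles of $\pi$ of length greater than $1$, and the remaining parts equal to $1$ correspond to the fixed points of $\pi$. Then \[ \sum_{i=1}^{m} \lambda_i \le m + N. \]
   Context: In the paper's setting, $N$ is the number of keywords in a keyword query $q=\{k_1,\dots,k_N\}$ and $n=|V_D|$ is the size of the vocabulary of a relational database $D$ (the set of its relation names, attributes and attribute domains). A configuration of $q$ on $D$ (an injective map from keywords to database terms) is identified with a permutation $\pi\in S_{|V_D|}$ in which each cycle contains at most one element of value bigger than $N$; the claim concerns such permutations. The cycle type of a permutation is the partition of $n$ formed by the lengths of its cycles listed in weakly decreasing order. *)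

theory Defs
  imports "HOL-Combinatorics.Permutations" "HOL-Combinatorics.Orbits" "HOL-Library.Multiset"
begin

definition cycles_of :: "(nat \<Rightarrow> nat) \<Rightarrow> nat \<Rightarrow> nat set set" where
  "cycles_of pi n = (\<lambda>x. orbit pi x) ` {1..n}"

definition cycle_type :: "(nat \<Rightarrow> nat) \<Rightarrow> nat \<Rightarrow> nat multiset" where
  "cycle_type pi n = image_mset card (mset_set (cycles_of pi n))"

end

theory Submission
  imports Defs
begin

lemma orbit_disj:
  assumes "pi permutes {1..n}" "c \<in> cycles_of pi n" "d \<in> cycles_of pi n" "c \<noteq> d"
  shows "c \<inter> d = {}"
proof (rule ccontr)
  assume "c \<inter> d \<noteq> {}"
  then obtain z where z: "z \<in> c" "z \<in> d" by blast
  obtain x where x: "c = orbit pi x" using assms(2) unfolding cycles_of_def by blast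
  obtain y where y: "d = orbit pi y" using assms(3) unfolding cycles_of_def by blast
  have cy: "\<And>w. cyclic_on pi (orbit pi w)" by (rule cyclic_on_orbit[OF assms(1)]) simp
  have "orbit pi z = c" unfolding x by (rule orbit_cyclic_eq3[OF cy]) (use x z in simp)
  moreover have "orbit pi z = d" unfolding y by (rule orbit_cyclic_eq3[OF cy]) (use y z in simp)
  ultimately show False using assms(4) by simp
qed

lemma cyc_sub:
  assumes "pi permutes {1..n}" "c \<in> cycles_of pi n"
  shows "c \<subseteq> {1..n}"
proof -
  obtain x where "x \<in> {1..n}" "c = orbit pi x" using assms(2) unfolding cycles_of_def by blast
  then show ?thesis using permutes_orbit_subset[OF assms(1)] by simp
qed

theorem mainTheorem1:
  fixes N n :: nat and pi :: "nat \<Rightarrow> nat"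
  assumes "0 < N" and "N \<le> n"
    and "pi permutes {1..n}"
    and "\<forall>c \<in> cycles_of pi n. card {i \<in> c. N < i} \<le> 1"
  shows "sum_mset (filter_mset (\<lambda>l. 1 < l) (cycle_type pi n))
           \<le> size (filter_mset (\<lambda>l. 1 < l) (cycle_type pi n)) + N"
proof -
  define C where "C = cycles_of pi n"
  define S where "S = {c \<in> C. 1 < card c}"
  have fC: "finite C" unfolding C_def cycles_of_def by simp
  have fS: "finite S" using fC unfolding S_def by simp
  have eq: "filter_mset (\<lambda>l. 1 < l) (cycle_type pi n) = image_mset card (mset_set S)"
  proof -
    have "filter_mset (\<lambda>l. 1 < l) (image_mset card (mset_set C))
        = image_mset card (filter_mset (\<lambda>c. 1 < card c) (mset_set C))"
      by (rule image_mset_filter_mset_swap[symmetric])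
    also have "filter_mset (\<lambda>c. 1 < card c) (mset_set C) = mset_set {c \<in> C. 1 < card c}"
      by (rule filter_mset_mset_set[OF fC])
    finally show ?thesis by (simp only: cycle_type_def C_def S_def)
  qed
  have sub: "\<And>c. c \<in> S \<Longrightarrow> c \<subseteq> {1..n}" using cyc_sub[OF assms(3)] unfolding S_def C_def by blast
  have le1: "card c \<le> 1 + card (c \<inter> {1..N})" if "c \<in> S" for c
  proof -
    have cs: "c \<subseteq> {1..n}" using sub that .
    have fc: "finite c" using cs finite_subset by blast
    have "card c \<le> card ({i \<in> c. N < i} \<union> (c \<inter> {1..N}))"
      by (rule card_mono) (use fc cs in auto)
    also have "\<dots> \<le> card {i \<in> c. N < i} + card (c \<inter> {1..N})"
      by (rule card_Un_le)
    finally have "card c \<le> card {i \<in> c. N < i} + card (c \<inter> {1..N})" .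
    moreover have "card {i \<in> c. N < i} \<le> 1" using assms(4) that unfolding S_def C_def by blast
    ultimately show ?thesis by linarith
  qed
  have "sum card S \<le> sum (\<lambda>c. 1 + card (c \<inter> {1..N})) S"
    using le1 by (rule sum_mono)
  also have "\<dots> = card S + sum (\<lambda>c. card (c \<inter> {1..N})) S"
    by (subst sum.distrib) simp
  also have "sum (\<lambda>c. card (c \<inter> {1..N})) S = card (\<Union>c\<in>S. c \<inter> {1..N})"
  proof (rule card_UN_disjoint[symmetric])
    show "finite S" by (rule fS)
    show "\<forall>c\<in>S. finite (c \<inter> {1..N})" by simp
    show "\<forall>c\<in>S. \<forall>d\<in>S. c \<noteq> d \<longrightarrow> (c \<inter> {1..N}) \<inter> (d \<inter> {1..N}) = {}"
      using orbit_disj[OF assms(3)] unfolding S_def C_def by blast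
  qed
  also have "card (\<Union>c\<in>S. c \<inter> {1..N}) \<le> card {1..N}"
    by (rule card_mono) auto
  finally have "sum card S \<le> card S + N" by simp
  then show ?thesis unfolding eq by (simp add: sum_unfold_sum_mset)
qed

end
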